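(* Let $\gamma > 1$ and let $I$ be a $\gamma$-stable instance of the metric Steiner tree problem with optimal Steiner tree $\mathrm{OPT}$. Let $H$ be a subgraph of $\mathrm{OPT}$ with at least one edge, and let $ab$ be an edge of $H$. If $c \in V(\mathrm{OPT}) \setminus V(H)$ satisfies $w_{ca} \le \gamma(\gamma - 1) w_{ab}$, then $ca$ is an edge of $\mathrm{OPT}$.
   Context: An instance of the metric Steiner tree problem consists of a finite set $V$ of points of a metric space with metric $d$, a set $T \subseteq V$ of terminals, and the complete graph on $V$ with edge weights $w_{uv} = d(u,v)$. Points of $V \setminus T$ are Steiner points. A Steiner tree is a tree in this complete graph whose vertex set contains all of $T$; its weight is the sum of its edge weights. For $\gamma > 1$, the instance is $\gamma$-stable if it has a minimum-weight Steiner tree $\mathrm{OPT}$ such that for every $w' : V \times V \to \mathbb{R}_{\ge 0}$ with $w_{uv} \le w'_{uv} \le \gamma w_{uv}$ for all $u,v$, every minimum-weight Steiner tree with respect to $w'$ equals $\mathrm{OPT}$. $V(\mathrm{OPT})$ and $V(H)$ denote vertex sets. *)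

theory Defs
  imports Main "HOL-Library.Library"
begin

definition metric_on :: "'a set \<Rightarrow> ('a \<Rightarrow> 'a \<Rightarrow> real) \<Rightarrow> bool" where
  "metric_on V d \<longleftrightarrow>
     (\<forall>u\<in>V. \<forall>v\<in>V. 0 \<le> d u v \<and> (d u v = 0 \<longleftrightarrow> u = v) \<and> d u v = d v u) \<and>
     (\<forall>u\<in>V. \<forall>v\<in>V. \<forall>x\<in>V. d u x \<le> d u v + d v x)"

definition edges_on :: "'a set \<Rightarrow> 'a set set" where
  "edges_on S = {{u, v} | u v. u \<in> S \<and> v \<in> S \<and> u \<noteq> v}"

definition edge_weight :: "('a \<Rightarrow> 'a \<Rightarrow> real) \<Rightarrow> 'a set \<Rightarrow> real" where
  "edge_weight d e = (THE r. \<exists>u v. e = {u, v} \<and> u \<noteq> v \<and> r = d u v)"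

definition connected_graph :: "'a set \<Rightarrow> 'a set set \<Rightarrow> bool" where
  "connected_graph S E \<longleftrightarrow>
     (\<forall>u\<in>S. \<forall>v\<in>S. (u, v) \<in> ({(x, y). {x, y} \<in> E})\<^sup>*)"

definition is_tree :: "'a set \<Rightarrow> 'a set set \<Rightarrow> bool" where
  "is_tree S E \<longleftrightarrow> finite S \<and> S \<noteq> {} \<and> E \<subseteq> edges_on S \<and>
     connected_graph S E \<and> card E = card S - 1"

definition steiner_tree :: "'a set \<Rightarrow> 'a set \<Rightarrow> 'a set \<times> 'a set set \<Rightarrow> bool" where
  "steiner_tree V T G \<longleftrightarrow> is_tree (fst G) (snd G) \<and> T \<subseteq> fst G \<and> fst G \<subseteq> V"

definition tree_weight :: "('a set \<Rightarrow> real) \<Rightarrow> 'a set \<times> 'a set set \<Rightarrow> real" where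
  "tree_weight w G = (\<Sum>e\<in>snd G. w e)"

definition min_steiner_tree ::
  "'a set \<Rightarrow> 'a set \<Rightarrow> ('a set \<Rightarrow> real) \<Rightarrow> 'a set \<times> 'a set set \<Rightarrow> bool" where
  "min_steiner_tree V T w G \<longleftrightarrow> steiner_tree V T G \<and>
     (\<forall>G'. steiner_tree V T G' \<longrightarrow> tree_weight w G \<le> tree_weight w G')"

definition perturbation ::
  "'a set \<Rightarrow> ('a \<Rightarrow> 'a \<Rightarrow> real) \<Rightarrow> real \<Rightarrow> ('a set \<Rightarrow> real) \<Rightarrow> bool" where
  "perturbation V d \<gamma> w' \<longleftrightarrow>
     (\<forall>e\<in>edges_on V. edge_weight d e \<le> w' e \<and> w' e \<le> \<gamma> * edge_weight d e)"

definition stable_wrt ::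
  "'a set \<Rightarrow> ('a \<Rightarrow> 'a \<Rightarrow> real) \<Rightarrow> 'a set \<Rightarrow> real \<Rightarrow> 'a set \<times> 'a set set \<Rightarrow> bool" where
  "stable_wrt V d T \<gamma> OPT \<longleftrightarrow> min_steiner_tree V T (edge_weight d) OPT \<and>
     (\<forall>w'. perturbation V d \<gamma> w' \<longrightarrow>
        (\<forall>G. min_steiner_tree V T w' G \<longrightarrow> G = OPT))"

definition gamma_stable ::
  "'a set \<Rightarrow> ('a \<Rightarrow> 'a \<Rightarrow> real) \<Rightarrow> 'a set \<Rightarrow> real \<Rightarrow> bool" where
  "gamma_stable V d T \<gamma> \<longleftrightarrow> (\<exists>OPT. stable_wrt V d T \<gamma> OPT)"

end

theory Submission
  imports Defs
begin

definition adj :: "'a set set \<Rightarrow> ('a \<times> 'a) set" where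
  "adj F = {(x, y). {x, y} \<in> F}"

lemma adj_iff[simp]: "(x, y) \<in> adj F \<longleftrightarrow> {x, y} \<in> F"
  by (simp add: adj_def)

lemma connected_graph_adj: "connected_graph S E \<longleftrightarrow> (\<forall>u\<in>S. \<forall>v\<in>S. (u, v) \<in> (adj E)\<^sup>*)"
  by (simp add: connected_graph_def adj_def)

lemma adj_sym: "(x, y) \<in> adj F \<Longrightarrow> (y, x) \<in> adj F"
  by (simp add: insert_commute)

lemma conn_sym: "(x, y) \<in> (adj F)\<^sup>* \<Longrightarrow> (y, x) \<in> (adj F)\<^sup>*"
proof (induction rule: rtrancl_induct)
  case base then show ?case by simp
next
  case (step y z)
  then show ?case by (meson adj_sym converse_rtrancl_into_rtrancl)
qed

lemma conn_mono: "F \<subseteq> G \<Longrightarrow> (x, y) \<in> (adj F)\<^sup>* \<Longrightarrow> (x, y) \<in> (adj G)\<^sup>*"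
proof -
  assume "F \<subseteq> G" "(x, y) \<in> (adj F)\<^sup>*"
  moreover have "adj F \<subseteq> adj G" using \<open>F \<subseteq> G\<close> by (auto simp: adj_def)
  ultimately show ?thesis using rtrancl_mono by blast
qed

lemma conn_edge: "{x, y} \<in> F \<Longrightarrow> (x, y) \<in> (adj F)\<^sup>*"
  by (simp add: r_into_rtrancl)

lemma reroute:
  assumes "(p, q) \<in> (adj G)\<^sup>*" "E - {{p, q}} \<subseteq> G"
  shows "(adj E)\<^sup>* \<subseteq> (adj G)\<^sup>*"
proof (rule rtrancl_subset_rtrancl, clarify)
  fix x y assume xy: "(x, y) \<in> adj E"
  show "(x, y) \<in> (adj G)\<^sup>*"
  proof (cases "{x, y} = {p, q}")
    case True
    then have "(x = p \<and> y = q) \<or> (x = q \<and> y = p)" by (simp add: doubleton_eq_iff)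
    then show ?thesis
    proof
      assume "x = p \<and> y = q" then show ?thesis using assms(1) by simp
    next
      assume "x = q \<and> y = p" then show ?thesis using conn_sym[OF assms(1)] by simp
    qed
  next
    case False
    have "{x, y} \<in> E" using xy by simp
    then have "{x, y} \<in> G" using False assms(2) by blast
    then show ?thesis by (rule conn_edge)
  qed
qed

lemma split_conn:
  assumes "(v, t) \<in> (adj E)\<^sup>*"
  shows "(v, t) \<in> (adj (E - {{p, q}}))\<^sup>* \<or> (v, p) \<in> (adj (E - {{p, q}}))\<^sup>* \<or> (v, q) \<in> (adj (E - {{p, q}}))\<^sup>*"
  using assms
proof (induction rule: converse_rtrancl_induct)
  case base then show ?case by simp
next
  case (step v u)
  show ?case
  proof (cases "{v, u} = {p, q}")
    case True
    then have "v = p \<or> v = q" by (metis doubleton_eq_iff)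
    then show ?thesis by (metis rtrancl.rtrancl_refl)
  next
    case False
    then have "(v, u) \<in> adj (E - {{p, q}})" using step(1) by simp
    then show ?thesis using step(3) by (meson converse_rtrancl_into_rtrancl)
  qed
qed

lemma neighbor:
  assumes "(v, t) \<in> (adj F)\<^sup>*" "v \<noteq> t"
  shows "\<exists>x. {x, t} \<in> F \<and> (v, x) \<in> (adj (F - {{x, t}}))\<^sup>*"
  using assms
proof (induction rule: converse_rtrancl_induct)
  case base then show ?case by simp
next
  case (step v u)
  show ?case
  proof (cases "u = t")
    case True
    have "{v, t} \<in> F" using step(1) True by simp
    moreover have "(v, v) \<in> (adj (F - {{v, t}}))\<^sup>*" by (rule rtrancl.rtrancl_refl)
    ultimately show ?thesis by blast
  next
    case False
    then obtain x where x: "{x, t} \<in> F" "(u, x) \<in> (adj (F - {{x, t}}))\<^sup>*" using step(3) by blast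
    have "{v, u} \<noteq> {x, t}" using False step(4) by (metis doubleton_eq_iff)
    then have "(v, u) \<in> adj (F - {{x, t}})" using step(1) by simp
    then show ?thesis using x by (meson converse_rtrancl_into_rtrancl)
  qed
qed

lemma finite_edges_on: "finite S \<Longrightarrow> finite (edges_on S)"
proof -
  assume "finite S"
  have "edges_on S \<subseteq> Pow S" by (auto simp: edges_on_def)
  then show ?thesis using \<open>finite S\<close> finite_subset by blast
qed

lemma edges_on_E:
  assumes "e \<in> edges_on S"
  obtains u v where "e = {u, v}" "u \<in> S" "v \<in> S" "u \<noteq> v"
  using assms unfolding edges_on_def by (simp only: mem_Collect_eq) blast

lemma edges_on_sub: "e \<in> edges_on S \<Longrightarrow> e \<subseteq> S"
  by (erule edges_on_E) simp

lemma edges_on_ne: "{x, y} \<in> edges_on S \<Longrightarrow> x \<noteq> y"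
proof (erule edges_on_E)
  fix u v assume "{x, y} = {u, v}" "u \<noteq> v"
  then show "x \<noteq> y" by (metis doubleton_eq_iff)
qed

lemma edges_on_I: "x \<in> S \<Longrightarrow> y \<in> S \<Longrightarrow> x \<noteq> y \<Longrightarrow> {x, y} \<in> edges_on S"
  unfolding edges_on_def by (simp only: mem_Collect_eq) blast

lemma lift_comp:
  assumes F: "F \<subseteq> edges_on S" and C: "C = {x\<in>S. (x, t) \<in> (adj F)\<^sup>*}"
    and Fc: "Fc = {g\<in>F. g \<subseteq> C}"
    and uv: "(u, v) \<in> (adj F)\<^sup>*" and uC: "u \<in> C"
  shows "(u, v) \<in> (adj Fc)\<^sup>* \<and> v \<in> C"
  using uv
proof (induction rule: rtrancl_induct)
  case base then show ?case using uC by (simp only: rtrancl.rtrancl_refl simp_thms)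
next
  case (step y z)
  have yz: "{y, z} \<in> F" using step(2) by simp
  then have "{y, z} \<subseteq> S" using F edges_on_sub by blast
  then have zS: "z \<in> S" by simp
  have yC: "y \<in> C" using step(3) by (rule conjunct2)
  have yt: "(y, t) \<in> (adj F)\<^sup>*" using yC C by simp
  have "(z, y) \<in> adj F" using yz by (simp add: insert_commute)
  then have "(z, t) \<in> (adj F)\<^sup>*" using yt by (rule converse_rtrancl_into_rtrancl)
  then have zC: "z \<in> C" using zS C by simp
  have "{y, z} \<subseteq> C" using yC zC by simp
  then have "{y, z} \<in> Fc" using yz Fc by simp
  then have "(y, z) \<in> adj Fc" by simp
  moreover have "(u, y) \<in> (adj Fc)\<^sup>*" using step(3) by (rule conjunct1)
  ultimately have "(u, z) \<in> (adj Fc)\<^sup>*" by (rule rtrancl_into_rtrancl[rotated])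
  then show ?case using zC by (rule conjI)
qed


lemma count_aux:
  "card F = n \<Longrightarrow> finite S \<Longrightarrow> F \<subseteq> edges_on S \<Longrightarrow> S \<noteq> {} \<Longrightarrow>
   (\<forall>u\<in>S. \<forall>v\<in>S. (u, v) \<in> (adj F)\<^sup>*) \<Longrightarrow> card S \<le> card F + 1"
proof (induction n arbitrary: F S rule: less_induct)
  case (less n F S)
  have finS: "finite S" and FS: "F \<subseteq> edges_on S" and Sne: "S \<noteq> {}"
    and con: "\<forall>u\<in>S. \<forall>v\<in>S. (u, v) \<in> (adj F)\<^sup>*" using less.prems by auto
  have finF: "finite F" using finite_edges_on[OF finS] FS by (rule finite_subset[rotated])
  show ?case
  proof (cases "F = {}")
    case True
    then have "adj F = {}" by (simp add: adj_def)
    then have "\<forall>u\<in>S. \<forall>v\<in>S. u = v" using con by simp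
    then have "card S \<le> Suc 0" using card_le_Suc0_iff_eq[OF finS] by blast
    then show ?thesis by simp
  next
    case False
    then obtain e where e: "e \<in> F" by blast
    then have "e \<in> edges_on S" using FS by blast
    then obtain p q where pq: "e = {p, q}" "p \<in> S" "q \<in> S" "p \<noteq> q" by (rule edges_on_E)
    define F' where "F' = F - {e}"
    have cardF': "card F' = card F - 1" using e finF by (simp add: F'_def)
    have cardlt: "card F' < n" using e finF less.prems(1) unfolding F'_def
      by (metis card_Diff1_less)
    have F'S: "F' \<subseteq> edges_on S" using FS F'_def by blast
    have finF': "finite F'" using finF F'_def by simp
    have cF: "card F > 0" using e finF card_gt_0_iff by blast
    show ?thesis
    proof (cases "(p, q) \<in> (adj F')\<^sup>*")
      case True
      have "(adj F)\<^sup>* \<subseteq> (adj F')\<^sup>*" using True by (rule reroute) (simp add: F'_def pq)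
      then have "\<forall>u\<in>S. \<forall>v\<in>S. (u, v) \<in> (adj F')\<^sup>*" using con by blast
      then have "card S \<le> card F' + 1" using less.IH[OF cardlt refl finS F'S Sne] by blast
      then show ?thesis using cardF' cF by simp
    next
      case False
      define Sp where "Sp = {x\<in>S. (x, p) \<in> (adj F')\<^sup>*}"
      define Sq where "Sq = {x\<in>S. (x, q) \<in> (adj F')\<^sup>*}"
      define Fp where "Fp = {g\<in>F'. g \<subseteq> Sp}"
      define Fq where "Fq = {g\<in>F'. g \<subseteq> Sq}"
      have F'eq: "F' = F - {{p, q}}" using F'_def pq by simp
      have SU: "S = Sp \<union> Sq"
      proof
        show "S \<subseteq> Sp \<union> Sq"
        proof
          fix v assume v: "v \<in> S"
          then have "(v, p) \<in> (adj F)\<^sup>*" using con pq by blast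
          then have "(v, p) \<in> (adj F')\<^sup>* \<or> (v, p) \<in> (adj F')\<^sup>* \<or> (v, q) \<in> (adj F')\<^sup>*"
            unfolding F'eq by (rule split_conn)
          then show "v \<in> Sp \<union> Sq" using v Sp_def Sq_def by blast
        qed
        show "Sp \<union> Sq \<subseteq> S" using Sp_def Sq_def by blast
      qed
      have Sdis: "Sp \<inter> Sq = {}"
      proof (rule ccontr)
        assume "Sp \<inter> Sq \<noteq> {}"
        then obtain v where vp: "(v, p) \<in> (adj F')\<^sup>*" and vq: "(v, q) \<in> (adj F')\<^sup>*" using Sp_def Sq_def by blast
        have "(p, q) \<in> (adj F')\<^sup>*" using rtrancl_trans[OF conn_sym[OF vp] vq] .
        then show False using False by blast
      qed
      have FU: "F' = Fp \<union> Fq"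
      proof
        show "F' \<subseteq> Fp \<union> Fq"
        proof
          fix g assume g: "g \<in> F'"
          then have "g \<in> edges_on S" using F'S by blast
          then obtain u v where uv: "g = {u, v}" "u \<in> S" "v \<in> S" by (rule edges_on_E)
          have uv1: "(u, v) \<in> (adj F')\<^sup>*" using g uv by (simp add: r_into_rtrancl)
          have uv2: "(v, u) \<in> (adj F')\<^sup>*" using uv1 by (rule conn_sym)
          have "u \<in> Sp \<or> u \<in> Sq" using SU uv by blast
          then show "g \<in> Fp \<union> Fq"
          proof
            assume "u \<in> Sp"
            then have "(u, p) \<in> (adj F')\<^sup>*" using Sp_def by simp
            then have "(v, p) \<in> (adj F')\<^sup>*" by (rule rtrancl_trans[OF uv2])
            then have "g \<subseteq> Sp" using uv \<open>u \<in> Sp\<close> Sp_def by simp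
            then show ?thesis using g Fp_def by simp
          next
            assume "u \<in> Sq"
            then have "(u, q) \<in> (adj F')\<^sup>*" using Sq_def by simp
            then have "(v, q) \<in> (adj F')\<^sup>*" by (rule rtrancl_trans[OF uv2])
            then have "g \<subseteq> Sq" using uv \<open>u \<in> Sq\<close> Sq_def by simp
            then show ?thesis using g Fq_def by simp
          qed
        qed
        show "Fp \<union> Fq \<subseteq> F'" using Fp_def Fq_def by blast
      qed
      have Fdis: "Fp \<inter> Fq = {}"
      proof (rule ccontr)
        assume "Fp \<inter> Fq \<noteq> {}"
        then obtain g where g: "g \<in> F'" "g \<subseteq> Sp" "g \<subseteq> Sq" using Fp_def Fq_def by blast
        then have "g \<in> edges_on S" using F'S by blast
        then obtain u v where uv: "g = {u, v}" by (rule edges_on_E)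
        then show False using g Sdis by blast
      qed
      have pSp: "p \<in> Sp" unfolding Sp_def using pq by simp
      have qSq: "q \<in> Sq" unfolding Sq_def using pq by simp
      have SpS: "Sp \<subseteq> S" and SqS: "Sq \<subseteq> S" using SU by blast+
      have finSp: "finite Sp" using finite_subset[OF SpS finS] .
      have finSq: "finite Sq" using finite_subset[OF SqS finS] .
      have Fp_e: "Fp \<subseteq> edges_on Sp"
      proof
        fix g assume g: "g \<in> Fp"
        then have g1: "g \<in> F'" and g2: "g \<subseteq> Sp" unfolding Fp_def by simp_all
        then have "g \<in> edges_on S" using F'S by blast
        then obtain u v where uv: "g = {u, v}" "u \<noteq> v" by (rule edges_on_E)
        then have "u \<in> Sp" "v \<in> Sp" using g2 by simp_all
        then show "g \<in> edges_on Sp" unfolding uv(1) using uv(2) by (rule edges_on_I)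
      qed
      have Fq_e: "Fq \<subseteq> edges_on Sq"
      proof
        fix g assume g: "g \<in> Fq"
        then have g1: "g \<in> F'" and g2: "g \<subseteq> Sq" unfolding Fq_def by simp_all
        then have "g \<in> edges_on S" using F'S by blast
        then obtain u v where uv: "g = {u, v}" "u \<noteq> v" by (rule edges_on_E)
        then have "u \<in> Sq" "v \<in> Sq" using g2 by simp_all
        then show "g \<in> edges_on Sq" unfolding uv(1) using uv(2) by (rule edges_on_I)
      qed
      have conp: "\<forall>u\<in>Sp. \<forall>v\<in>Sp. (u, v) \<in> (adj Fp)\<^sup>*"
      proof (intro ballI)
        fix u v assume u: "u \<in> Sp" and v: "v \<in> Sp"
        have a1: "(u, p) \<in> (adj F')\<^sup>*" using u unfolding Sp_def by simp
        have a2: "(v, p) \<in> (adj F')\<^sup>*" using v unfolding Sp_def by simp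
        have "(u, v) \<in> (adj F')\<^sup>*" using rtrancl_trans[OF a1 conn_sym[OF a2]] .
        then show "(u, v) \<in> (adj Fp)\<^sup>*" using lift_comp[OF F'S Sp_def Fp_def _ u] by simp
      qed
      have conq: "\<forall>u\<in>Sq. \<forall>v\<in>Sq. (u, v) \<in> (adj Fq)\<^sup>*"
      proof (intro ballI)
        fix u v assume u: "u \<in> Sq" and v: "v \<in> Sq"
        have a1: "(u, q) \<in> (adj F')\<^sup>*" using u unfolding Sq_def by simp
        have a2: "(v, q) \<in> (adj F')\<^sup>*" using v unfolding Sq_def by simp
        have "(u, v) \<in> (adj F')\<^sup>*" using rtrancl_trans[OF a1 conn_sym[OF a2]] .
        then show "(u, v) \<in> (adj Fq)\<^sup>*" using lift_comp[OF F'S Sq_def Fq_def _ u] by simp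
      qed
      have FpF: "Fp \<subseteq> F'" and FqF: "Fq \<subseteq> F'" using FU by blast+
      have finFp: "finite Fp" using finite_subset[OF FpF finF'] .
      have finFq: "finite Fq" using finite_subset[OF FqF finF'] .
      have "card Fp \<le> card F'" using card_mono[OF finF' FpF] .
      then have lp: "card Fp < n" using cardlt by simp
      have "card Fq \<le> card F'" using card_mono[OF finF' FqF] .
      then have lq: "card Fq < n" using cardlt by simp
      have ip: "card Sp \<le> card Fp + 1"
        using less.IH[OF lp refl finSp Fp_e _ conp] pSp by (simp add: ex_in_conv[symmetric]; blast)
      have iq: "card Sq \<le> card Fq + 1"
        using less.IH[OF lq refl finSq Fq_e _ conq] qSq by (simp add: ex_in_conv[symmetric]; blast)
      have "card S = card Sp + card Sq" using SU Sdis finSp finSq by (simp add: card_Un_disjoint)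
      moreover have "card F' = card Fp + card Fq" using FU Fdis finFp finFq by (simp add: card_Un_disjoint)
      ultimately show ?thesis using ip iq cardF' cF by simp
    qed
  qed
qed

lemma conn_card:
  "finite S \<Longrightarrow> F \<subseteq> edges_on S \<Longrightarrow> S \<noteq> {} \<Longrightarrow>
   (\<forall>u\<in>S. \<forall>v\<in>S. (u, v) \<in> (adj F)\<^sup>*) \<Longrightarrow> card S \<le> card F + 1"
  using count_aux by blast

lemma tree_acyclic:
  assumes "is_tree S E" "{p, q} \<in> E"
  shows "(p, q) \<notin> (adj (E - {{p, q}}))\<^sup>*"
proof
  assume pq: "(p, q) \<in> (adj (E - {{p, q}}))\<^sup>*"
  have finS: "finite S" and Sne: "S \<noteq> {}" and ES: "E \<subseteq> edges_on S"
    and con: "connected_graph S E" and cE: "card E = card S - 1"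
    using assms(1) unfolding is_tree_def by auto
  have finE: "finite E" using finite_edges_on[OF finS] ES by (rule finite_subset[rotated])
  have "(adj E)\<^sup>* \<subseteq> (adj (E - {{p, q}}))\<^sup>*" using pq by (rule reroute) simp
  then have "\<forall>u\<in>S. \<forall>v\<in>S. (u, v) \<in> (adj (E - {{p, q}}))\<^sup>*"
    using con unfolding connected_graph_adj by blast
  then have "card S \<le> card (E - {{p, q}}) + 1"
    using conn_card[OF finS _ Sne] ES by blast
  moreover have "card (E - {{p, q}}) = card E - 1" using assms(2) finE by simp
  moreover have "card E > 0" using assms(2) finE card_gt_0_iff by blast
  moreover have "card S > 0" using finS Sne card_gt_0_iff by blast
  ultimately show False using cE by simp
qed


lemma metric_sym: "metric_on V d \<Longrightarrow> u \<in> V \<Longrightarrow> v \<in> V \<Longrightarrow> d u v = d v u"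
  unfolding metric_on_def by blast

lemma metric_pos: "metric_on V d \<Longrightarrow> u \<in> V \<Longrightarrow> v \<in> V \<Longrightarrow> u \<noteq> v \<Longrightarrow> d u v > 0"
proof -
  assume m: "metric_on V d" and uv: "u \<in> V" "v \<in> V" "u \<noteq> v"
  then have "0 \<le> d u v \<and> (d u v = 0 \<longleftrightarrow> u = v)" unfolding metric_on_def by blast
  then show ?thesis using uv(3) by linarith
qed

lemma metric_tri: "metric_on V d \<Longrightarrow> u \<in> V \<Longrightarrow> v \<in> V \<Longrightarrow> x \<in> V \<Longrightarrow> d u x \<le> d u v + d v x"
  unfolding metric_on_def by blast

lemma ew_eq:
  assumes m: "metric_on V d" and uv: "u \<in> V" "v \<in> V" "u \<noteq> v"
  shows "edge_weight d {u, v} = d u v"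
  unfolding edge_weight_def
proof (rule the_equality)
  show "\<exists>u' v'. {u, v} = {u', v'} \<and> u' \<noteq> v' \<and> d u v = d u' v'" using uv(3) by blast
next
  fix r assume "\<exists>u' v'. {u, v} = {u', v'} \<and> u' \<noteq> v' \<and> r = d u' v'"
  then obtain u' v' where h: "{u, v} = {u', v'}" "r = d u' v'" by blast
  from h(1) have "(u' = u \<and> v' = v) \<or> (u' = v \<and> v' = u)" by (metis doubleton_eq_iff)
  then show "r = d u v" using h(2) metric_sym[OF m uv(1,2)] by auto
qed

lemma ew_nonneg:
  assumes m: "metric_on V d" and g: "g \<in> edges_on V"
  shows "edge_weight d g \<ge> 0"
proof -
  obtain u v where uv: "g = {u, v}" "u \<in> V" "v \<in> V" "u \<noteq> v" using g by (rule edges_on_E)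
  show ?thesis using ew_eq[OF m uv(2-4)] metric_pos[OF m uv(2-4)] uv(1) by simp
qed

lemma finite_steiner: "finite V \<Longrightarrow> finite {G. steiner_tree V T G}"
proof -
  assume fin: "finite V"
  have "{G. steiner_tree V T G} \<subseteq> Pow V \<times> Pow (Pow V)"
  proof
    fix G assume "G \<in> {G. steiner_tree V T G}"
    then have st: "is_tree (fst G) (snd G)" "fst G \<subseteq> V" unfolding steiner_tree_def by auto
    then have "snd G \<subseteq> edges_on (fst G)" unfolding is_tree_def by blast
    then have "\<forall>g\<in>snd G. g \<subseteq> V" using edges_on_sub st(2) by blast
    then show "G \<in> Pow V \<times> Pow (Pow V)" using st(2) by (cases G) auto
  qed
  moreover have "finite (Pow V \<times> Pow (Pow V))" using fin by simp
  ultimately show ?thesis by (rule finite_subset)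
qed

lemma swap_contra:
  assumes finV: "finite V" and met: "metric_on V d" and g1: "\<gamma> > 1"
    and st: "stable_wrt V d T \<gamma> (S, E)"
    and e: "{p, q} \<in> E" and f: "f \<in> edges_on S" "f \<notin> E"
    and pq: "(p, q) \<in> (adj (insert f (E - {{p, q}})))\<^sup>*"
    and w: "edge_weight d f \<le> \<gamma> * edge_weight d {p, q}"
  shows False
proof -
  have mst: "min_steiner_tree V T (edge_weight d) (S, E)"
    and uniq: "\<forall>w'. perturbation V d \<gamma> w' \<longrightarrow> (\<forall>G. min_steiner_tree V T w' G \<longrightarrow> G = (S, E))"
    using st unfolding stable_wrt_def by (rule conjunct1, rule conjunct2)
  have "steiner_tree V T (S, E)" using mst unfolding min_steiner_tree_def by (rule conjunct1)
  then have tr: "is_tree S E" and TS: "T \<subseteq> S" and SV: "S \<subseteq> V"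
    unfolding steiner_tree_def by simp_all
  have finS: "finite S" and Sne: "S \<noteq> {}" and ES: "E \<subseteq> edges_on S"
    and con: "connected_graph S E" and cE: "card E = card S - 1"
    using tr unfolding is_tree_def by simp_all
  have finE: "finite E" using finite_edges_on[OF finS] ES by (rule finite_subset[rotated])
  define E' where "E' = insert f (E - {{p, q}})"
  have E'S: "E' \<subseteq> edges_on S" using ES f(1) E'_def by blast
  have "E - {{p, q}} \<subseteq> E'" unfolding E'_def by (rule subset_insertI)
  then have "(adj E)\<^sup>* \<subseteq> (adj E')\<^sup>*" using pq unfolding E'_def by (intro reroute) simp_all
  then have conE': "connected_graph S E'" using con unfolding connected_graph_adj by blast
  have fn: "f \<notin> E - {{p, q}}" using f(2) by blast
  have finE1: "finite (E - {{p, q}})" using finE by simp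
  have "card E' = Suc (card (E - {{p, q}}))" unfolding E'_def using fn finE1 by simp
  also have "\<dots> = card E" using card_Suc_Diff1[OF finE e] .
  finally have cE': "card E' = card S - 1" using cE by simp
  have treeE': "is_tree S E'" unfolding is_tree_def using finS Sne E'S conE' cE' by (intro conjI)
  have stE': "steiner_tree V T (S, E')" unfolding steiner_tree_def using treeE' TS SV by simp
  define w0 where "w0 = edge_weight d"
  define w' where "w' = (\<lambda>g. if g \<in> E then \<gamma> * w0 g else w0 g)"
  have pert: "perturbation V d \<gamma> w'"
    unfolding perturbation_def
  proof
    fix g assume g: "g \<in> edges_on V"
    have "w0 g \<ge> 0" unfolding w0_def using ew_nonneg[OF met g] .
    then have "w0 g \<le> \<gamma> * w0 g" using g1 by (simp add: mult_le_cancel_right1 less_imp_le)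
    then show "edge_weight d g \<le> w' g \<and> w' g \<le> \<gamma> * edge_weight d g"
      unfolding w'_def w0_def by auto
  qed
  define ST where "ST = {G. steiner_tree V T G}"
  have finST: "finite ST" unfolding ST_def using finV by (rule finite_steiner)
  have SEST: "(S, E) \<in> ST" unfolding ST_def using mst unfolding min_steiner_tree_def by simp
  define m where "m = Min (tree_weight w' ` ST)"
  have "m \<in> tree_weight w' ` ST" unfolding m_def using finST SEST by (intro Min_in) auto
  then obtain G0 where G0: "G0 \<in> ST" "tree_weight w' G0 = m" by blast
  have mle: "\<forall>G\<in>ST. m \<le> tree_weight w' G" unfolding m_def using finST by simp
  have G0st: "steiner_tree V T G0" using G0(1) unfolding ST_def by simp
  have G0min: "\<forall>G'. steiner_tree V T G' \<longrightarrow> tree_weight w' G0 \<le> tree_weight w' G'"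
  proof (intro allI impI)
    fix G' assume "steiner_tree V T G'"
    then have "G' \<in> ST" unfolding ST_def by simp
    then show "tree_weight w' G0 \<le> tree_weight w' G'" using mle G0(2) by simp
  qed
  have "min_steiner_tree V T w' G0"
    unfolding min_steiner_tree_def using G0st G0min by (rule conjI)
  then have "G0 = (S, E)" by (rule uniq[rule_format, OF pert])
  then have optle: "\<forall>G'. steiner_tree V T G' \<longrightarrow> tree_weight w' (S, E) \<le> tree_weight w' G'"
    using G0min by simp
  have "tree_weight w' (S, E) = w' {p, q} + sum w' (E - {{p, q}})"
    unfolding tree_weight_def using sum.remove[OF finE e] by simp
  moreover have "tree_weight w' (S, E') = w' f + sum w' (E - {{p, q}})"
    unfolding tree_weight_def E'_def using sum.insert[OF finE1 fn] by simp
  moreover have "w' {p, q} = \<gamma> * w0 {p, q}" unfolding w'_def using e by simp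
  moreover have "w' f = w0 f" unfolding w'_def using f(2) by simp
  ultimately have "tree_weight w' (S, E') \<le> tree_weight w' (S, E)" using w unfolding w0_def by simp
  then have "\<forall>G'. steiner_tree V T G' \<longrightarrow> tree_weight w' (S, E') \<le> tree_weight w' G'"
    using optle by (meson order_trans)
  then have "min_steiner_tree V T w' (S, E')"
    unfolding min_steiner_tree_def using stE' by simp
  then have "(S, E') = (S, E)" by (rule uniq[rule_format, OF pert])
  then have "f \<in> E" unfolding E'_def by blast
  then show False using f(2) by blast
qed


theorem mainTheorem7:
  fixes V T :: "'a set" and d :: "'a \<Rightarrow> 'a \<Rightarrow> real" and \<gamma> :: real
    and S :: "'a set" and E :: "'a set set"
    and SH :: "'a set" and EH :: "'a set set" and a b c :: 'a
  assumes "finite V" and "T \<subseteq> V" and "metric_on V d" and "\<gamma> > 1"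
    and "gamma_stable V d T \<gamma>"
    and "min_steiner_tree V T (edge_weight d) (S, E)"
    and "SH \<subseteq> S" and "EH \<subseteq> E" and "EH \<subseteq> edges_on SH" and "EH \<noteq> {}"
    and "{a, b} \<in> EH"
    and "c \<in> S - SH"
    and "edge_weight d {c, a} \<le> \<gamma> * (\<gamma> - 1) * edge_weight d {a, b}"
  shows "{c, a} \<in> E"
proof (rule ccontr)
  assume nE: "{c, a} \<notin> E"
  have met: "metric_on V d" using assms(3) .
  have g1: "\<gamma> > 1" using assms(4) .
  obtain OPT where st0: "stable_wrt V d T \<gamma> OPT" using assms(5) unfolding gamma_stable_def by blast
  have uniq0: "\<forall>w'. perturbation V d \<gamma> w' \<longrightarrow> (\<forall>G. min_steiner_tree V T w' G \<longrightarrow> G = OPT)"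
    using st0 unfolding stable_wrt_def by (rule conjunct2)
  have pert0: "perturbation V d \<gamma> (edge_weight d)"
    unfolding perturbation_def
  proof
    fix g assume g: "g \<in> edges_on V"
    have "edge_weight d g \<ge> 0" using ew_nonneg[OF met g] .
    then have "edge_weight d g \<le> \<gamma> * edge_weight d g" using g1 by (simp add: mult_le_cancel_right1 less_imp_le)
    then show "edge_weight d g \<le> edge_weight d g \<and> edge_weight d g \<le> \<gamma> * edge_weight d g" by simp
  qed
  have "(S, E) = OPT" by (rule uniq0[rule_format, OF pert0 assms(6)])
  then have st: "stable_wrt V d T \<gamma> (S, E)" using st0 by simp
  note swap = swap_contra[OF assms(1) met g1 st]
  have "steiner_tree V T (S, E)" using assms(6) unfolding min_steiner_tree_def by (rule conjunct1)
  then have tr: "is_tree S E" and SV: "S \<subseteq> V" unfolding steiner_tree_def by simp_all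
  have ES: "E \<subseteq> edges_on S" and con: "connected_graph S E"
    using tr unfolding is_tree_def by simp_all
  have abEH: "{a, b} \<in> edges_on SH" using assms(9,11) by blast
  then have abSH: "{a, b} \<subseteq> SH" by (rule edges_on_sub)
  have ab: "a \<noteq> b" using abEH by (rule edges_on_ne)
  have abE: "{a, b} \<in> E" using assms(8,11) by blast
  have aS: "a \<in> S" and bS: "b \<in> S" using abSH assms(7) by auto
  have cS: "c \<in> S" and cSH: "c \<notin> SH" using assms(12) by simp_all
  have ca: "c \<noteq> a" and cb: "c \<noteq> b" using cSH abSH by auto
  have aV: "a \<in> V" and bV: "b \<in> V" and cV: "c \<in> V" using aS bS cS SV by auto
  have ew: "\<And>x y. x \<in> V \<Longrightarrow> y \<in> V \<Longrightarrow> x \<noteq> y \<Longrightarrow> edge_weight d {x, y} = d x y"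
    using ew_eq[OF met] by blast
  have dab: "d a b > 0" using metric_pos[OF met aV bV ab] .
  have hyp: "d c a \<le> \<gamma> * (\<gamma> - 1) * d a b" using assms(13) ew[OF cV aV ca] ew[OF aV bV ab] by simp
  define E0 where "E0 = E - {{a, b}}"
  have E0E: "E0 \<subseteq> E" unfolding E0_def by blast
  have "(c, a) \<in> (adj E)\<^sup>*" using con cS aS unfolding connected_graph_adj by blast
  then have "(c, a) \<in> (adj E0)\<^sup>* \<or> (c, a) \<in> (adj E0)\<^sup>* \<or> (c, b) \<in> (adj E0)\<^sup>*"
    unfolding E0_def by (rule split_conn)
  then have cases: "(c, a) \<in> (adj E0)\<^sup>* \<or> (c, b) \<in> (adj E0)\<^sup>*" by blast
  have caS: "{c, a} \<in> edges_on S" using cS aS ca by (rule edges_on_I)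
  show False
  proof (cases "(c, b) \<in> (adj E0)\<^sup>*")
    case True
    obtain y where y1: "{y, b} \<in> E0" and y2: "(c, y) \<in> (adj (E0 - {{y, b}}))\<^sup>*"
      using neighbor[OF True cb] by blast
    have ybE: "{y, b} \<in> E" using y1 E0E by blast
    have ybS: "{y, b} \<in> edges_on S" using ybE ES by blast
    have yS: "y \<in> S" using edges_on_sub[OF ybS] by simp
    have yV: "y \<in> V" using yS SV by blast
    have yb: "y \<noteq> b" using ybS by (rule edges_on_ne)
    have ya: "y \<noteq> a"
    proof
      assume "y = a" then have "{a, b} \<in> E0" using y1 by simp
      then show False unfolding E0_def by simp
    qed
    show False
    proof (cases "d c a \<le> \<gamma> * d a b")
      case True
      have "(a, c) \<in> adj (insert {c, a} E0)" by (simp add: insert_commute)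
      moreover have "(c, b) \<in> (adj (insert {c, a} E0))\<^sup>*"
        using conn_mono[OF subset_insertI \<open>(c, b) \<in> (adj E0)\<^sup>*\<close>] .
      ultimately have pq: "(a, b) \<in> (adj (insert {c, a} (E - {{a, b}})))\<^sup>*"
        unfolding E0_def by (rule converse_rtrancl_into_rtrancl)
      have w: "edge_weight d {c, a} \<le> \<gamma> * edge_weight d {a, b}"
        using True ew[OF cV aV ca] ew[OF aV bV ab] by simp
      show False using swap[OF abE caS nE pq w] .
    next
      case False
      have "\<gamma> * d a b < \<gamma> * (\<gamma> - 1) * d a b" using False hyp by linarith
      then have "(\<gamma> * d a b) * 1 < (\<gamma> * d a b) * (\<gamma> - 1)" by (simp add: algebra_simps)
      moreover have "\<gamma> * d a b > 0" using g1 dab by simp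
      ultimately have "1 < \<gamma> - 1" using mult_less_cancel_left_pos by blast
      then have g2: "\<gamma> \<ge> 2" by simp
      have yaE: "{y, a} \<notin> E"
      proof
        assume yaE: "{y, a} \<in> E"
        have "{a, y} \<in> E0" using yaE yb unfolding E0_def by (auto simp: insert_commute doubleton_eq_iff)
        then have "(a, y) \<in> adj E0" by simp
        moreover have "(y, b) \<in> (adj E0)\<^sup>*" using y1 by (rule conn_edge)
        ultimately have "(a, b) \<in> (adj E0)\<^sup>*" by (rule converse_rtrancl_into_rtrancl)
        then show False using tree_acyclic[OF tr abE] unfolding E0_def by simp
      qed
      have yaS: "{y, a} \<in> edges_on S" using yS aS ya by (rule edges_on_I)
      have tri: "d y a \<le> d y b + d b a" using metric_tri[OF met yV bV aV] .
      have sba: "d b a = d a b" using metric_sym[OF met bV aV] .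
      show False
      proof (cases "d y b \<le> d a b")
        case True
        have "d y a \<le> 2 * d a b" using tri sba True by simp
        also have "\<dots> \<le> \<gamma> * d a b" using g2 dab by (simp add: mult_right_mono less_imp_le)
        finally have w: "edge_weight d {y, a} \<le> \<gamma> * edge_weight d {a, b}"
          using ew[OF yV aV ya] ew[OF aV bV ab] by simp
        have "(a, y) \<in> adj (insert {y, a} E0)" by (simp add: insert_commute)
        moreover have "(y, b) \<in> (adj (insert {y, a} E0))\<^sup>*"
          using y1 by (intro conn_edge) simp
        ultimately have pq: "(a, b) \<in> (adj (insert {y, a} (E - {{a, b}})))\<^sup>*"
          unfolding E0_def by (rule converse_rtrancl_into_rtrancl)
        show False using swap[OF abE yaS yaE pq w] .
      next
        case False
        have "d y a \<le> 2 * d y b" using tri sba False by simp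
        also have "\<dots> \<le> \<gamma> * d y b" using g2 metric_pos[OF met yV bV yb]
          by (simp add: mult_right_mono less_imp_le)
        finally have w: "edge_weight d {y, a} \<le> \<gamma> * edge_weight d {y, b}"
          using ew[OF yV aV ya] ew[OF yV bV yb] by simp
        have "(y, a) \<in> adj (insert {y, a} (E - {{y, b}}))" by simp
        moreover have "{a, b} \<in> E - {{y, b}}" using abE ya by (auto simp: doubleton_eq_iff)
        then have "(a, b) \<in> (adj (insert {y, a} (E - {{y, b}})))\<^sup>*"
          by (intro conn_edge) simp
        ultimately have pq: "(y, b) \<in> (adj (insert {y, a} (E - {{y, b}})))\<^sup>*"
          by (rule converse_rtrancl_into_rtrancl)
        show False using swap[OF ybE yaS yaE pq w] .
      qed
    qed
  next
    case False
    then have cA: "(c, a) \<in> (adj E0)\<^sup>*" using cases by blast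
    obtain x where x1: "{x, a} \<in> E0" and x2: "(c, x) \<in> (adj (E0 - {{x, a}}))\<^sup>*"
      using neighbor[OF cA ca] by blast
    have xaE: "{x, a} \<in> E" using x1 E0E by blast
    have xaS: "{x, a} \<in> edges_on S" using xaE ES by blast
    have xS: "x \<in> S" using edges_on_sub[OF xaS] by simp
    have xV: "x \<in> V" using xS SV by blast
    have xa: "x \<noteq> a" using xaS by (rule edges_on_ne)
    have xb: "x \<noteq> b"
    proof
      assume "x = b" then have "{a, b} \<in> E0" using x1 by (simp add: insert_commute)
      then show False unfolding E0_def by simp
    qed
    show False
    proof (cases "d x a \<ge> (\<gamma> - 1) * d a b")
      case True
      have "d c a \<le> \<gamma> * ((\<gamma> - 1) * d a b)" using hyp by (simp add: mult.assoc)
      also have "\<dots> \<le> \<gamma> * d x a" using True g1 by (simp add: mult_left_mono)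
      finally have w: "edge_weight d {c, a} \<le> \<gamma> * edge_weight d {x, a}"
        using ew[OF cV aV ca] ew[OF xV aV xa] by simp
      have sub: "E0 - {{x, a}} \<subseteq> insert {c, a} (E - {{x, a}})" unfolding E0_def by blast
      have "(x, c) \<in> (adj (insert {c, a} (E - {{x, a}})))\<^sup>*"
        using conn_mono[OF sub conn_sym[OF x2]] .
      moreover have "(c, a) \<in> (adj (insert {c, a} (E - {{x, a}})))\<^sup>*"
        by (intro conn_edge) simp
      ultimately have pq: "(x, a) \<in> (adj (insert {c, a} (E - {{x, a}})))\<^sup>*"
        by (rule rtrancl_trans)
      show False using swap[OF xaE caS nE pq w] .
    next
      case False
      have xbE: "{x, b} \<notin> E"
      proof
        assume xbE: "{x, b} \<in> E"
        have "{x, b} \<in> E0" using xbE xa unfolding E0_def by (auto simp: doubleton_eq_iff)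
        then have "(x, b) \<in> adj E0" by simp
        moreover have "(c, x) \<in> (adj E0)\<^sup>*" using conn_mono[OF _ x2] by blast
        ultimately have "(c, b) \<in> (adj E0)\<^sup>*" by (rule rtrancl_into_rtrancl[rotated])
        then show False using \<open>\<not> (c, b) \<in> (adj E0)\<^sup>*\<close> by simp
      qed
      have xbS: "{x, b} \<in> edges_on S" using xS bS xb by (rule edges_on_I)
      have "d x b \<le> d x a + d a b" using metric_tri[OF met xV aV bV] .
      also have "\<dots> \<le> (\<gamma> - 1) * d a b + d a b" using False by simp
      also have "\<dots> = \<gamma> * d a b" by (simp add: algebra_simps)
      finally have w: "edge_weight d {x, b} \<le> \<gamma> * edge_weight d {a, b}"
        using ew[OF xV bV xb] ew[OF aV bV ab] by simp
      have "(a, x) \<in> adj (insert {x, b} E0)" using x1 by (simp add: insert_commute)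
      moreover have "(x, b) \<in> (adj (insert {x, b} E0))\<^sup>*" by (intro conn_edge) simp
      ultimately have pq: "(a, b) \<in> (adj (insert {x, b} (E - {{a, b}})))\<^sup>*"
        unfolding E0_def by (rule converse_rtrancl_into_rtrancl)
      show False using swap[OF abE xbS xbE pq w] .
    qed
  qed
qed

end
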